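(* Let $\alpha\in(0,1)$ and let $f_n,g_n:[0,+\infty)\to\mathbb{R}$ ($n\in\mathbb{N}$) be functions such that: $f_n$ and $g_n$ are H\"older continuous of order $\alpha$ for every $n$; $g_n\to0$ uniformly on $[0,+\infty)$; and there exists $L\in\mathbb{R}$ with $|f_n(t_1)-f_n(t_2)|\le L|t_1-t_2|$ for all $n\in\mathbb{N}$ and all $t_1,t_2\ge0$. Then $$\limsup_{n\to+\infty}\operatorname{Hold}_\alpha(f_n+g_n)\le\max\Big\{\limsup_{n\to+\infty}\operatorname{Hold}_\alpha(f_n),\ \limsup_{n\to+\infty}\operatorname{Hold}_\alpha(g_n)\Big\}.$$
   Context: For $c:[0,+\infty)\to\mathbb{R}$, $\operatorname{Hold}_\alpha(c):=\sup\{|c(t)-c(s)|/|t-s|^\alpha:\ t,s\ge0,\ t\neq s\}$. *)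

theory Defs
  imports "HOL-Analysis.Analysis"
begin

definition Hold :: "real \<Rightarrow> (real \<Rightarrow> real) \<Rightarrow> ereal" where
  "Hold a c = (SUP p \<in> {(t, s). 0 \<le> t \<and> 0 \<le> s \<and> t \<noteq> s}.
      ereal (\<bar>c (fst p) - c (snd p)\<bar> / \<bar>fst p - snd p\<bar> powr a))"

definition holder_continuous :: "real \<Rightarrow> (real \<Rightarrow> real) \<Rightarrow> bool" where
  "holder_continuous a c \<longleftrightarrow> Hold a c < \<infinity>"

end

theory Submission
  imports Defs
begin

lemma Hold_ge:
  assumes "0 \<le> t" "0 \<le> s" "t \<noteq> s"
  shows "ereal (\<bar>c t - c s\<bar> / \<bar>t - s\<bar> powr a) \<le> Hold a c"
  unfolding Hold_def
  by (rule SUP_upper2[of "(t,s)"]) (use assms in auto)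

lemma Hold_nonneg: "0 \<le> Hold a c"
proof -
  have "ereal (\<bar>c 0 - c 1\<bar> / \<bar>0 - 1\<bar> powr a) \<le> Hold a c" by (rule Hold_ge) auto
  moreover have "0 \<le> ereal (\<bar>c 0 - c 1\<bar> / \<bar>0 - 1\<bar> powr a)" by simp
  ultimately show ?thesis by (rule order.trans[rotated])
qed

lemma Hold_le:
  assumes "\<And>t s. 0 \<le> t \<Longrightarrow> 0 \<le> s \<Longrightarrow> t \<noteq> s \<Longrightarrow> \<bar>c t - c s\<bar> / \<bar>t - s\<bar> powr a \<le> M"
  shows "Hold a c \<le> ereal M"
  unfolding Hold_def
  by (rule SUP_least) (use assms in auto)

lemma key:
  fixes f g :: "real \<Rightarrow> real"
  assumes "0 < \<alpha>" "\<alpha> < 1" "0 < \<delta>" "0 \<le> L"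
    and lip: "\<forall>t1 t2. 0 \<le> t1 \<longrightarrow> 0 \<le> t2 \<longrightarrow> \<bar>f t1 - f t2\<bar> \<le> L * \<bar>t1 - t2\<bar>"
    and gb: "\<forall>t\<ge>0. \<bar>g t\<bar> \<le> m"
    and hf: "Hold \<alpha> f \<le> ereal a" and hg: "Hold \<alpha> g \<le> ereal b"
  shows "Hold \<alpha> (\<lambda>t. f t + g t) \<le> ereal (max (b + L * \<delta> powr (1 - \<alpha>)) (a + 2 * m / \<delta> powr \<alpha>))"
proof (rule Hold_le)
  fix t s :: real assume ts: "0 \<le> t" "0 \<le> s" "t \<noteq> s"
  define h where "h = \<bar>t - s\<bar>"
  have hpos: "0 < h" using ts by (simp add: h_def)
  have hp: "0 < h powr \<alpha>" using hpos by simp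
  have qf: "\<bar>f t - f s\<bar> / h powr \<alpha> \<le> a"
    using order.trans[OF Hold_ge[OF ts, of f \<alpha>] hf] by (simp add: h_def)
  have qg: "\<bar>g t - g s\<bar> / h powr \<alpha> \<le> b"
    using order.trans[OF Hold_ge[OF ts, of g \<alpha>] hg] by (simp add: h_def)
  have tri: "\<bar>(f t + g t) - (f s + g s)\<bar> / h powr \<alpha> \<le> \<bar>f t - f s\<bar> / h powr \<alpha> + \<bar>g t - g s\<bar> / h powr \<alpha>"
    using hp by (simp add: add_divide_distrib[symmetric] divide_right_mono)
  show "\<bar>(f t + g t) - (f s + g s)\<bar> / \<bar>t - s\<bar> powr \<alpha> \<le> max (b + L * \<delta> powr (1 - \<alpha>)) (a + 2 * m / \<delta> powr \<alpha>)"
  proof (cases "h \<le> \<delta>")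
    case True
    have "\<bar>f t - f s\<bar> / h powr \<alpha> \<le> L * h / h powr \<alpha>"
      using lip ts hp by (simp add: h_def divide_right_mono)
    also have "L * h / h powr \<alpha> = L * h powr (1 - \<alpha>)"
      using hpos by (simp add: powr_diff)
    also have "\<dots> \<le> L * \<delta> powr (1 - \<alpha>)"
      using True hpos assms by (intro mult_left_mono powr_mono2) auto
    finally show ?thesis using tri qg unfolding h_def by linarith
  next
    case False
    have m0: "0 \<le> m" using gb by force
    have "\<bar>g t - g s\<bar> \<le> 2 * m" using gb ts by (smt (verit))
    hence "\<bar>g t - g s\<bar> / h powr \<alpha> \<le> 2 * m / h powr \<alpha>" using hp by (simp add: divide_right_mono)
    also have "\<dots> \<le> 2 * m / \<delta> powr \<alpha>"
      using False assms m0 by (intro divide_left_mono powr_mono2) auto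
    finally show ?thesis using tri qf unfolding h_def by linarith
  qed
qed


theorem mainTheorem4:
  fixes \<alpha> :: real and f g :: "nat \<Rightarrow> real \<Rightarrow> real"
  assumes "0 < \<alpha>" and "\<alpha> < 1"
    and "\<And>n. holder_continuous \<alpha> (f n)"
    and "\<And>n. holder_continuous \<alpha> (g n)"
    and "uniform_limit {0..} g (\<lambda>_. 0) sequentially"
    and "\<exists>L::real. \<forall>n t1 t2. 0 \<le> t1 \<longrightarrow> 0 \<le> t2 \<longrightarrow> \<bar>f n t1 - f n t2\<bar> \<le> L * \<bar>t1 - t2\<bar>"
  shows "limsup (\<lambda>n. Hold \<alpha> (\<lambda>t. f n t + g n t))
           \<le> max (limsup (\<lambda>n. Hold \<alpha> (f n))) (limsup (\<lambda>n. Hold \<alpha> (g n)))"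
proof -
  obtain L0 where L0: "\<forall>n t1 t2. 0 \<le> t1 \<longrightarrow> 0 \<le> t2 \<longrightarrow> \<bar>f n t1 - f n t2\<bar> \<le> L0 * \<bar>t1 - t2\<bar>"
    using assms(6) by blast
  define L where "L = max L0 0"
  have L0le: "L0 * x \<le> L * x" if "0 \<le> x" for x :: real
    using that by (simp add: L_def mult_right_mono)
  have lip: "\<forall>t1 t2. 0 \<le> t1 \<longrightarrow> 0 \<le> t2 \<longrightarrow> \<bar>f n t1 - f n t2\<bar> \<le> L * \<bar>t1 - t2\<bar>" for n
    using L0 L0le by (meson abs_ge_zero order.trans)
  have Lnn: "0 \<le> L" by (simp add: L_def)
  define A where "A = limsup (\<lambda>n. Hold \<alpha> (f n))"
  define B where "B = limsup (\<lambda>n. Hold \<alpha> (g n))"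
  show ?thesis
  proof (cases "A = \<infinity> \<or> B = \<infinity>")
    case True then show ?thesis unfolding A_def B_def by (auto simp: max_def)
  next
    case False
    have "0 \<le> A" unfolding A_def by (rule le_Limsup) (auto simp: Hold_nonneg)
    moreover have "0 \<le> B" unfolding B_def by (rule le_Limsup) (auto simp: Hold_nonneg)
    ultimately obtain a0 b0 where ab: "A = ereal a0" "B = ereal b0"
      using False by (cases A; cases B) auto
    show ?thesis unfolding A_def[symmetric] B_def[symmetric] ab
    proof (rule ereal_le_epsilon2)
      fix e :: real assume e: "0 < e"
      define \<delta> where "\<delta> = ((e/2) / (L + 1)) powr (1 / (1 - \<alpha>))"
      have dpos: "0 < \<delta>" using e Lnn by (simp add: \<delta>_def)
      have dpow: "\<delta> powr (1 - \<alpha>) = (e/2) / (L + 1)"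
        unfolding \<delta>_def using e Lnn assms(2) by (simp add: powr_powr)
      have Ld: "L * \<delta> powr (1 - \<alpha>) \<le> e/2"
        unfolding dpow using e Lnn by (simp add: field_simps)
      define m where "m = (e/2) * \<delta> powr \<alpha> / 2"
      have mpos: "0 < m" using e dpos by (simp add: m_def)
      have m2: "2 * m / \<delta> powr \<alpha> = e/2" using dpos by (simp add: m_def)
      have ev1: "\<forall>\<^sub>F n in sequentially. Hold \<alpha> (f n) < ereal (a0 + e/2)"
        by (rule Limsup_lessD) (use e ab A_def in auto)
      have ev2: "\<forall>\<^sub>F n in sequentially. Hold \<alpha> (g n) < ereal (b0 + e/2)"
        by (rule Limsup_lessD) (use e ab B_def in auto)
      have ev3: "\<forall>\<^sub>F n in sequentially. \<forall>x\<in>{0..}. dist (g n x) 0 < m"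
        using assms(5) mpos unfolding uniform_limit_iff by blast
      have "\<forall>\<^sub>F n in sequentially. Hold \<alpha> (\<lambda>t. f n t + g n t) \<le> ereal (max a0 b0) + ereal e"
        using ev1 ev2 ev3
      proof eventually_elim
        case (elim n)
        have gb: "\<forall>t\<ge>0. \<bar>g n t\<bar> \<le> m" using elim(3) by (auto simp: dist_real_def less_imp_le)
        have "Hold \<alpha> (\<lambda>t. f n t + g n t) \<le> ereal (max (b0 + e/2 + L * \<delta> powr (1 - \<alpha>)) (a0 + e/2 + 2 * m / \<delta> powr \<alpha>))"
          by (rule key[OF assms(1,2) dpos Lnn lip gb]) (use elim in auto)
        also have "\<dots> \<le> ereal (max a0 b0 + e)"
          using Ld m2 by (simp add: max_def)
        also have "\<dots> = ereal (max a0 b0) + ereal e" by (simp add: max_def)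
        finally show ?case .
      qed
      then show "limsup (\<lambda>n. Hold \<alpha> (\<lambda>t. f n t + g n t)) \<le> max (ereal a0) (ereal b0) + ereal e"
        by (intro Limsup_bounded) (auto simp: max_def)
    qed
  qed
qed

end
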